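(* An element $b=\sum_{i=0}^{k-1}b_iz^i\in B_k$ stabilizes $dT$ under the coadjoint action if and only if $b_i\in\mathfrak{h}_i$ for all $i=1,\dots,k-1$.
   Context: Let $\mathfrak{g}=\mathfrak{gl}_n(\mathbb{C})$, $\mathfrak{t}$ a Cartan subalgebra, $k>1$, $T=\sum_{i=1}^{k-1}T_iz^{-i}$, $T_i\in\mathfrak{t}$, $T_{k-1}\ne0$, $dT=\sum_{i=1}^{k-1}(-iT_i)z^{-i-1}dz$. $B_k=\{\sum_{i=0}^{k-1}b_iz^i:b_0=1,b_i\in\mathfrak{g}\}\subset\mathrm{GL}_n(\mathbb{C}[z]/(z^k))$; identify $\mathfrak{b}_k^*$ with $\{\sum_{i=1}^{k-1}X_iz^{-i-1}dz:X_i\in\mathfrak{g}\}$ via $\mathrm{res}_{z=0}\mathrm{tr}$; the coadjoint action is $\mathrm{Ad}^*_bB=$ the part of $bBb^{-1}$ in degrees $z^{-i-1}dz$, $1\le i\le k-1$. For $i=0,\dots,k-2$ put $\mathfrak{h}_i=\bigcap_{j=i+1}^{k-1}\ker\mathrm{ad}_{T_j}$, and $\mathfrak{h}_{k-1}=\mathfrak{g}$. *)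

theory Defs
  imports "HOL-Analysis.Analysis"
begin

text \<open>g = gl_n(C) is rendered as complex n x n matrices, type complex^'n^'n,
  with matrix product (**).  Elements of B_k and of b_k^* are coefficient
  sequences nat => matrix; only indices < k are meaningful.\<close>

type_synonym 'n cmat = "complex^'n^'n"

definition diag_mat :: "('n::finite) cmat \<Rightarrow> bool" where
  "diag_mat D \<longleftrightarrow> (\<forall>i j. i \<noteq> j \<longrightarrow> D $ i $ j = 0)"

definition cartan_subalgebra :: "('n::finite) cmat set \<Rightarrow> bool" where
  "cartan_subalgebra t \<longleftrightarrow>
     (\<exists>P::'n cmat. invertible P \<and> t = {P ** D ** matrix_inv P | D. diag_mat D})"

text \<open>Coefficients of the inverse of b = sum b_i z^i (b_0 = 1) in GL_n(C[z]/(z^k)):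
  c_0 = 1, c_q = - sum_{p=1..q} b_p c_{q-p}.\<close>
fun inv_coeff :: "(nat \<Rightarrow> ('n::finite) cmat) \<Rightarrow> nat \<Rightarrow> 'n cmat" where
  "inv_coeff b 0 = mat 1"
| "inv_coeff b (Suc q) = - (\<Sum>p\<le>q. b (Suc p) ** inv_coeff b (q - p))"

text \<open>Coefficient of z^{-i-1}dz of Ad^*_b B, where B = sum_{j=1}^{k-1} X_j z^{-j-1}dz:
  the degree z^{-i-1} part of b B b^{-1}.\<close>
definition coadj_coeff ::
  "nat \<Rightarrow> (nat \<Rightarrow> ('n::finite) cmat) \<Rightarrow> (nat \<Rightarrow> 'n cmat) \<Rightarrow> nat \<Rightarrow> 'n cmat" where
  "coadj_coeff k b X i =
     (\<Sum>j\<in>{i..<k}. \<Sum>p\<le>j - i. b p ** X j ** inv_coeff b (j - i - p))"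

text \<open>Coefficients of dT = sum_{i=1}^{k-1} (-i T_i) z^{-i-1} dz.\<close>
definition dT_coeff :: "(nat \<Rightarrow> ('n::finite) cmat) \<Rightarrow> nat \<Rightarrow> 'n cmat" where
  "dT_coeff T i = (- real i) *\<^sub>R T i"

definition stabilizes ::
  "nat \<Rightarrow> (nat \<Rightarrow> ('n::finite) cmat) \<Rightarrow> (nat \<Rightarrow> 'n cmat) \<Rightarrow> bool" where
  "stabilizes k b X \<longleftrightarrow> (\<forall>i\<in>{1..<k}. coadj_coeff k b X i = X i)"

definition h_sub :: "nat \<Rightarrow> (nat \<Rightarrow> ('n::finite) cmat) \<Rightarrow> nat \<Rightarrow> 'n cmat set" where
  "h_sub k T i = (if i = k - 1 then UNIV
     else {Y. \<forall>j\<in>{i<..k-1}. T j ** Y - Y ** T j = 0})"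

end

theory Submission imports Defs begin

lemma mm_add_r: "((A::'a::semiring_1^'n^'m) + B) ** (C::'a^'p^'n) = A ** C + B ** C"
  by (vector matrix_matrix_mult_def sum.distrib[symmetric] field_simps)
lemma mm_diff_r: "((A::'a::ring_1^'n^'m) - B) ** (C::'a^'p^'n) = A ** C - B ** C"
  by (vector matrix_matrix_mult_def sum_subtractf[symmetric] field_simps)
lemma mm_diff_l: "(C::'a::ring_1^'n^'m) ** ((A::'a^'p^'n) - B) = C ** A - C ** B"
  by (vector matrix_matrix_mult_def sum_subtractf[symmetric] field_simps)
lemma mm_neg_l: "(- (A::'a::ring_1^'n^'m)) ** (C::'a^'p^'n) = - (A ** C)"
  by (vector matrix_matrix_mult_def sum_negf[symmetric])
lemma mm_sum_r: "(\<Sum>x\<in>S. f x) ** (C::'a::semiring_1^'p^'n) = (\<Sum>x\<in>S. (f x :: 'a^'n^'m) ** C)"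
  by (induction S rule: infinite_finite_induct) (auto simp: mm_add_r)
lemma mm_sum_l: "(C::'a::semiring_1^'n^'m) ** (\<Sum>x\<in>S. f x)  = (\<Sum>x\<in>S. C ** (f x :: 'a^'p^'n))"
  by (induction S rule: infinite_finite_induct) (auto simp: matrix_add_ldistrib)
lemma mm_scaleR_l: "(r *\<^sub>R (A::complex^'n^'m)) ** (C::complex^'p^'n) = r *\<^sub>R (A ** C)"
  by (simp add: scalar_matrix_assoc)
lemma mm_scaleR_r: "(A::complex^'n^'m) ** (r *\<^sub>R (C::complex^'p^'n)) = r *\<^sub>R (A ** C)"
  by (simp add: matrix_scalar_ac scalar_matrix_assoc)

lemma tri:
  fixes G :: "nat \<Rightarrow> nat \<Rightarrow> 'a::comm_monoid_add"
  shows "(\<Sum>s<N. \<Sum>p\<le>s. G p (s-p)) = (\<Sum>q<N. \<Sum>p<N-q. G p q)"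
proof -
  have "(\<Sum>s<N. \<Sum>p\<le>s. G p (s-p)) = (\<Sum>(p,q)\<in>{(p,q). p+q<N}. G p q)"
    by (rule sum.triangle_reindex[symmetric])
  also have "\<dots> = (\<Sum>(q,p)\<in>{(q,p). p+q<N}. G p q)"
    by (rule sum.reindex_bij_witness[where i="\<lambda>(q,p). (p,q)" and j="\<lambda>(p,q). (q,p)"]) auto
  also have "{(q,p). p+q<N} = Sigma {..<N} (\<lambda>q. {..<N-q})" by auto
  also have "(\<Sum>(q,p)\<in>Sigma {..<N} (\<lambda>q. {..<N-q}). G p q) = (\<Sum>q<N. \<Sum>p<N-q. G p q)"
    by (rule sum.Sigma[symmetric]) auto
  finally show ?thesis .
qed


lemma conv_inv:
  assumes "b 0 = mat 1" "s \<ge> 1"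
  shows "(\<Sum>p\<le>s. b p ** inv_coeff b (s-p)) = 0"
proof -
  obtain q where s: "s = Suc q" using assms(2) by (cases s) auto
  have "(\<Sum>p\<le>Suc q. b p ** inv_coeff b (Suc q-p)) = b 0 ** inv_coeff b (Suc q) + (\<Sum>p\<le>q. b (Suc p) ** inv_coeff b (q-p))"
    by (subst sum.atMost_Suc_shift) simp
  also have "\<dots> = 0" using assms(1) by simp
  finally show ?thesis using s by simp
qed

definition Dm :: "nat \<Rightarrow> (nat \<Rightarrow> ('n::finite) cmat) \<Rightarrow> (nat \<Rightarrow> 'n cmat) \<Rightarrow> nat \<Rightarrow> 'n cmat" where
  "Dm k b X m = (\<Sum>p<k-m. b p ** X (m+p))"
definition Em :: "nat \<Rightarrow> (nat \<Rightarrow> ('n::finite) cmat) \<Rightarrow> (nat \<Rightarrow> 'n cmat) \<Rightarrow> nat \<Rightarrow> 'n cmat" where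
  "Em k b X m = (\<Sum>p<k-m. X (m+p) ** b p)"

lemma coadj_eq:
  "coadj_coeff k b X i = (\<Sum>q<k-i. Dm k b X (i+q) ** inv_coeff b q)"
proof -
  let ?c = "inv_coeff b"
  have "coadj_coeff k b X i = (\<Sum>j\<in>{i..<k}. \<Sum>p\<le>j - i. b p ** X j ** ?c (j - i - p))"
    by (simp add: coadj_coeff_def)
  also have "\<dots> = (\<Sum>s<k-i. \<Sum>p\<le>s. b p ** X (i+s) ** ?c (s - p))"
    by (rule sum.reindex_bij_witness[where i="\<lambda>s. i+s" and j="\<lambda>j. j - i"]) auto
  also have "\<dots> = (\<Sum>s<k-i. \<Sum>p\<le>s. (\<lambda>p q. b p ** X (i+p+q) ** ?c q) p (s - p))"
    by (intro sum.cong refl) simp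
  also have "\<dots> = (\<Sum>q<k-i. \<Sum>p<k-i-q. b p ** X (i+p+q) ** ?c q)"
    by (rule tri)
  also have "\<dots> = (\<Sum>q<k-i. Dm k b X (i+q) ** ?c q)"
    by (intro sum.cong refl) (simp add: Dm_def mm_sum_r algebra_simps)
  finally show ?thesis .
qed

lemma E_eq:
  assumes "b 0 = mat 1" "i < k"
  shows "(\<Sum>q<k-i. Em k b X (i+q) ** inv_coeff b q) = X i"
proof -
  let ?c = "inv_coeff b"
  have "(\<Sum>q<k-i. Em k b X (i+q) ** ?c q) = (\<Sum>q<k-i. \<Sum>p<k-i-q. (\<lambda>p q. X (i+p+q) ** b p ** ?c q) p q)"
    by (intro sum.cong refl) (simp add: Em_def mm_sum_r algebra_simps)
  also have "\<dots> = (\<Sum>s<k-i. \<Sum>p\<le>s. (\<lambda>p q. X (i+p+q) ** b p ** ?c q) p (s - p))"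
    by (rule tri[symmetric])
  also have "\<dots> = (\<Sum>s<k-i. X (i+s) ** (\<Sum>p\<le>s. b p ** ?c (s - p)))"
    by (intro sum.cong refl) (simp add: mm_sum_l matrix_mul_assoc)
  also have "\<dots> = X i"
  proof -
    obtain N where N: "k - i = Suc N" using assms(2) by (cases "k-i") auto
    show ?thesis unfolding N
      apply (subst sum.lessThan_Suc_shift)
      using assms by (simp add: conv_inv del: sum.atMost_Suc)
  qed
  finally show ?thesis .
qed

definition Fm where "Fm k b X m = Dm k b X m - Em k b X m"

lemma coadj_iff:
  assumes "b 0 = mat 1" "i < k"
  shows "coadj_coeff k b X i = X i \<longleftrightarrow> (\<Sum>q<k-i. Fm k b X (i+q) ** inv_coeff b q) = 0"
  using E_eq[where b=b and X=X, OF assms]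
  by (simp add: coadj_eq Fm_def mm_diff_r sum_subtractf)

lemma down:
  assumes "\<forall>i\<in>{1..<k}. (\<Sum>q<k-i. (F::nat \<Rightarrow> 'n::finite cmat) (i+q) ** inv_coeff b q) = 0"
  shows "\<forall>m\<in>{1..<k}. F m = 0"
proof -
  have "\<And>d m. k - m = d \<Longrightarrow> m \<in> {1..<k} \<Longrightarrow> F m = 0"
  proof -
    fix d m
    show "k - m = d \<Longrightarrow> m \<in> {1..<k} \<Longrightarrow> F m = 0"
    proof (induction d arbitrary: m rule: less_induct)
      case (less d)
      then obtain N where N: "k - m = Suc N" by (cases "k-m") auto
      have IH: "F (m + Suc q) = 0" if "q < N" for q
        using less.IH[of "k - (m + Suc q)" "m + Suc q"] less.prems N that by auto
      have "0 = (\<Sum>q<Suc N. F (m+q) ** inv_coeff b q)" using assms[rule_format, of m] less.prems N by simp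
      also have "\<dots> = F m"
        apply (subst sum.lessThan_Suc_shift) using IH by simp
      finally show ?case by simp
    qed
  qed
  then show ?thesis by blast
qed

lemma stab_iff:
  assumes "b 0 = mat 1"
  shows "stabilizes k b X \<longleftrightarrow> (\<forall>m\<in>{1..<k}. Fm k b X m = 0)"
proof
  assume "stabilizes k b X"
  then have "\<forall>i\<in>{1..<k}. (\<Sum>q<k-i. Fm k b X (i+q) ** inv_coeff b q) = 0"
    using coadj_iff[where b=b and X=X, OF assms] by (auto simp: stabilizes_def)
  then show "\<forall>m\<in>{1..<k}. Fm k b X m = 0" by (rule down)
next
  assume H: "\<forall>m\<in>{1..<k}. Fm k b X m = 0"
  show "stabilizes k b X" unfolding stabilizes_def
  proof
    fix i assume i: "i \<in> {1..<k}"
    have "(\<Sum>q<k-i. Fm k b X (i+q) ** inv_coeff b q) = 0"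
      by (rule sum.neutral) (use H i in auto)
    then show "coadj_coeff k b X i = X i" using coadj_iff[where b=b and X=X, OF assms] i by auto
  qed
qed


lemma scalar_lem:
  fixes a x :: "nat \<Rightarrow> complex"
  assumes h0: "\<forall>j. a j * x 0 = 0"
    and eq: "\<forall>m. 1 \<le> m \<longrightarrow> m < k \<longrightarrow> (\<Sum>p<k-m. real (m+p) *\<^sub>R (x p * a (m+p))) = 0"
    and ij: "i < j" "j < k"
  shows "a j * x i = 0"
proof (rule ccontr)
  assume ne: "a j * x i \<noteq> 0"
  define S where "S = {j. j<k \<and> a j \<noteq> 0}"
  have fS: "finite S" unfolding S_def by auto
  have jS: "j \<in> S" using ne ij unfolding S_def by auto
  define J where "J = Max S"
  have JS: "J \<in> S" unfolding J_def using fS jS Max_in by blast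
  have jJ: "j \<le> J" unfolding J_def using fS jS by simp
  have Jk: "J < k" and aJ: "a J \<noteq> 0" using JS unfolding S_def by auto
  have above: "a l = 0" if "J < l" "l < k" for l
  proof (rule ccontr)
    assume "a l \<noteq> 0"
    then have "l \<in> S" using that unfolding S_def by auto
    then have "l \<le> J" unfolding J_def using fS by simp
    then show False using that by simp
  qed
  have claim: "i' < J \<Longrightarrow> x i' = 0" for i'
  proof (induction i' rule: less_induct)
    case (less i')
    show ?case
    proof (cases "i' = 0")
      case True
      then show ?thesis using h0 aJ by (metis mult_eq_0_iff)
    next
      case False
      define m where "m = J - i'"
      have m1: "1 \<le> m" "m < k" using less.prems False Jk unfolding m_def by auto
      have iin: "i' \<in> {..<k-m}" using less.prems Jk unfolding m_def by auto
      have "0 = (\<Sum>p<k-m. real (m+p) *\<^sub>R (x p * a (m+p)))" using eq m1 by simp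
      also have "\<dots> = real (m+i') *\<^sub>R (x i' * a (m+i')) + (\<Sum>p\<in>{..<k-m} - {i'}. real (m+p) *\<^sub>R (x p * a (m+p)))"
        by (rule sum.remove[OF _ iin]) simp
      also have "(\<Sum>p\<in>{..<k-m} - {i'}. real (m+p) *\<^sub>R (x p * a (m+p))) = 0"
      proof (rule sum.neutral, rule ballI)
        fix p assume p: "p \<in> {..<k-m} - {i'}"
        show "real (m+p) *\<^sub>R (x p * a (m+p)) = 0"
        proof (cases "p < i'")
          case True
          then have "x p = 0" using less.IH less.prems by simp
          then show ?thesis by simp
        next
          case False
          then have "J < m + p" "m + p < k" using p less.prems unfolding m_def by auto
          then show ?thesis using above by simp
        qed
      qed
      also have "m + i' = J" unfolding m_def using less.prems by simp
      finally have "real J *\<^sub>R (x i' * a J) = 0" by simp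
      then show ?thesis using aJ less.prems by simp
    qed
  qed
  have "x i = 0" using claim ij jJ by simp
  then show False using ne by simp
qed


definition Sm :: "nat \<Rightarrow> (nat \<Rightarrow> ('n::finite) cmat) \<Rightarrow> (nat \<Rightarrow> 'n cmat) \<Rightarrow> nat \<Rightarrow> 'n cmat" where
  "Sm k b T m = (\<Sum>p<k-m. real (m+p) *\<^sub>R (b p ** T (m+p) - T (m+p) ** b p))"

lemma F_dT: "Fm k b (dT_coeff T) m = - Sm k b T m"
  unfolding Fm_def Dm_def Em_def dT_coeff_def Sm_def
  apply (simp add: sum_subtractf[symmetric] sum_negf[symmetric] mm_scaleR_l mm_scaleR_r
      scaleR_right_diff_distrib)
  apply (intro sum.cong refl)
  apply (simp add: algebra_simps)
  done

lemma diag_entry: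
  assumes "diag_mat D"
  shows "(A ** D - D ** A) $ r $ s = A $ r $ s * (D $ s $ s - D $ r $ r)"
proof -
  have 1: "(A ** D) $ r $ s = A $ r $ s * D $ s $ s"
    unfolding matrix_matrix_mult_def using assms unfolding diag_mat_def
    by (simp add: sum.remove[of UNIV s] sum.neutral)
  have 2: "(D ** A) $ r $ s = D $ r $ r * A $ r $ s"
    unfolding matrix_matrix_mult_def using assms unfolding diag_mat_def
    by (simp add: sum.remove[of UNIV r] sum.neutral)
  show ?thesis using 1 2 by (simp add: algebra_simps)
qed

lemma conj_comm:
  assumes "P ** Q = mat 1"
  shows "Q ** (B ** T - T ** B) ** P = (Q**B**P) ** (Q**T**P) - (Q**T**P) ** (Q**(B::'n::finite cmat)**P)"
proof -
  have "(Q**B**P) ** (Q**T**P) = Q ** B ** (P ** Q) ** T ** P" by (simp add: matrix_mul_assoc)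
  moreover have "(Q**T**P) ** (Q**B**P) = Q ** T ** (P ** Q) ** B ** P" by (simp add: matrix_mul_assoc)
  ultimately show ?thesis using assms by (simp add: mm_diff_l mm_diff_r matrix_mul_assoc)
qed

lemma conj_Sm:
  assumes "P ** Q = mat 1"
  shows "Q ** Sm k b T m ** P = (\<Sum>p<k-m. real (m+p) *\<^sub>R
     ((Q**b p**P) ** (Q**T (m+p)**P) - (Q**T (m+p)**P) ** (Q**(b p::'n::finite cmat)**P)))"
  unfolding Sm_def mm_sum_l mm_sum_r
  by (intro sum.cong refl) (simp add: mm_scaleR_l mm_scaleR_r conj_comm[OF assms])


lemma comm_from_h:
  assumes "\<forall>i\<in>{1..<k}. b i \<in> h_sub k T i" "b 0 = mat 1" "m \<ge> 1"
  shows "Sm k b T m = 0"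
  unfolding Sm_def
proof (rule sum.neutral, rule ballI)
  fix p assume p: "p \<in> {..<k-m}"
  show "real (m+p) *\<^sub>R (b p ** T (m+p) - T (m+p) ** b p) = 0"
  proof (cases "p = 0")
    case True then show ?thesis using assms(2) by simp
  next
    case False
    then have "b p \<in> h_sub k T p" using assms(1) p by auto
    moreover have "p \<noteq> k - 1" "m + p \<in> {p<..k-1}" using p False assms(3) by auto
    ultimately have "T (m+p) ** b p - b p ** T (m+p) = 0" unfolding h_sub_def by auto
    then show ?thesis by simp
  qed
qed

theorem lemma3p4:
  fixes k :: nat and t :: "('n::finite) cmat set"
    and T :: "nat \<Rightarrow> 'n cmat" and b :: "nat \<Rightarrow> 'n cmat"
  assumes "k > 1"
    and "cartan_subalgebra t"
    and "\<forall>i\<in>{1..<k}. T i \<in> t"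
    and "T (k - 1) \<noteq> 0"
    and "b 0 = mat 1"
  shows "stabilizes k b (dT_coeff T) \<longleftrightarrow> (\<forall>i\<in>{1..<k}. b i \<in> h_sub k T i)"
proof -
  have st: "stabilizes k b (dT_coeff T) \<longleftrightarrow> (\<forall>m\<in>{1..<k}. Sm k b T m = 0)"
    using stab_iff[where b=b and k=k and X="dT_coeff T", OF assms(5)] by (simp add: F_dT)
  show ?thesis
  proof
    assume H: "\<forall>i\<in>{1..<k}. b i \<in> h_sub k T i"
    have "\<forall>m\<in>{1..<k}. Sm k b T m = 0"
    proof
      fix m assume "m \<in> {1..<k}"
      then show "Sm k b T m = 0" by (intro comm_from_h[OF H assms(5)]) simp
    qed
    then show "stabilizes k b (dT_coeff T)" using st by blast
  next
    assume "stabilizes k b (dT_coeff T)"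
    then have S0: "\<forall>m\<in>{1..<k}. Sm k b T m = 0" using st by simp
    obtain P :: "'n cmat" where P: "invertible P" and tP: "t = {P ** D ** matrix_inv P | D. diag_mat D}"
      using assms(2) unfolding cartan_subalgebra_def by blast
    define Q where "Q = matrix_inv P"
    have PQ: "P ** Q = mat 1" and QP: "Q ** P = mat 1"
      using someI_ex[OF P[unfolded invertible_def]] unfolding Q_def matrix_inv_def by auto
    define D where "D j = Q ** T j ** P" for j
    define b' where "b' p = Q ** b p ** P" for p
    have recover: "P ** (Q ** X ** P) ** Q = X" for X :: "'n cmat"
      by (simp add: matrix_mul_assoc PQ) (metis PQ matrix_mul_assoc matrix_mul_rid)
    have diagD: "diag_mat (D j)" if jr: "j \<in> {1..<k}" for j
    proof -
      obtain D' where D': "diag_mat D'" "T j = P ** D' ** Q"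
      proof -
        have "T j \<in> t" using assms(3) jr by blast
        then have "\<exists>D0. diag_mat D0 \<and> T j = P ** D0 ** Q" unfolding tP Q_def by (simp only: mem_Collect_eq) blast
        then show ?thesis using that by blast
      qed
      have "D j = (Q ** P) ** D' ** (Q ** P)" unfolding D_def D'(2) by (simp add: matrix_mul_assoc)
      then show ?thesis using D'(1) QP by simp
    qed
    have key: "(b' i ** D j - D j ** b' i) $ r $ s = 0" if ij: "i < j" "j < k" for i j r s
    proof -
      define x where "x p = b' p $ r $ s" for p
      define a where "a j = D j $ s $ s - D j $ r $ r" for j
      have h0: "\<forall>j. a j * x 0 = 0"
      proof -
        have "b' 0 = mat 1" using QP by (simp add: b'_def assms(5))
        then show ?thesis by (auto simp: x_def a_def mat_def)
      qed
      have eq: "\<forall>m. 1 \<le> m \<longrightarrow> m < k \<longrightarrow> (\<Sum>p<k-m. real (m+p) *\<^sub>R (x p * a (m+p))) = 0"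
      proof (intro allI impI)
        fix m assume m: "1 \<le> m" "m < k"
        have "0 = (Q ** Sm k b T m ** P) $ r $ s" using S0 m by simp
        also have "\<dots> = (\<Sum>p<k-m. real (m+p) *\<^sub>R ((b' p ** D (m+p) - D (m+p) ** b' p) $ r $ s))"
          unfolding conj_Sm[OF PQ] b'_def D_def by (simp add: sum_component)
        also have "\<dots> = (\<Sum>p<k-m. real (m+p) *\<^sub>R (x p * a (m+p)))"
        proof (intro sum.cong refl)
          fix p assume "p \<in> {..<k-m}"
          then have "m+p \<in> {1..<k}" using m by auto
          then show "real (m+p) *\<^sub>R ((b' p ** D (m+p) - D (m+p) ** b' p) $ r $ s) = real (m+p) *\<^sub>R (x p * a (m+p))"
            using diag_entry[OF diagD[of "m+p"], of "b' p" r s] by (simp add: x_def a_def)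
        qed
        finally show "(\<Sum>p<k-m. real (m+p) *\<^sub>R (x p * a (m+p))) = 0" by simp
      qed
      have "a j * x i = 0" by (rule scalar_lem[OF h0 eq ij])
      moreover have "j \<in> {1..<k}" using ij by auto
      ultimately show ?thesis using diag_entry[OF diagD] by (simp add: x_def a_def mult.commute)
    qed
    show "\<forall>i\<in>{1..<k}. b i \<in> h_sub k T i"
    proof
      fix i assume i: "i \<in> {1..<k}"
      show "b i \<in> h_sub k T i"
      proof (cases "i = k - 1")
        case True then show ?thesis by (simp add: h_sub_def)
      next
        case False
        have "T j ** b i - b i ** T j = 0" if j: "j \<in> {i<..k-1}" for j
        proof -
          have jk: "i < j" "j < k" using j assms(1) by auto
          have "b' i ** D j - D j ** b' i = 0"
            using key[OF jk] by (simp add: vec_eq_iff)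
          then have "Q ** (b i ** T j - T j ** b i) ** P = 0"
            by (simp add: conj_comm[OF PQ] b'_def D_def)
          then have "P ** (Q ** (b i ** T j - T j ** b i) ** P) ** Q = 0" by simp
          then have "b i ** T j - T j ** b i = 0" by (simp only: recover)
          then show ?thesis by (simp add: algebra_simps)
        qed
        then show ?thesis using False by (simp add: h_sub_def)
      qed
    qed
  qed
qed

end
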